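(* Let $S^*\subset(0,\infty)$ be an open set that is additive (i.e. $a,b\in S^*\Rightarrow a+b\in S^*$), and let $S=[0,\infty)\setminus S^*$ (a closed set). Then $S$ is bounded; let $L=\sup S$. For $x\in[0,L]$ define $a(x)=\sup\{y\in\partial S: y\le x\}$, $b(x)=\inf\{y\in\partial S: y\ge x\}$, $\alpha(x)=x-a(x)$ and $\beta(x)=b(x)-x$, where $\partial S$ is the boundary of $S$ in $\mathbb{R}$. Then: (a) for every $s\in S$, $\alpha(s)\in S$ and $\beta(s)\in S$; (b) if $s^*\in S^*$ and $x\in[0,L]$ are such that both $x$ and $s^*+x$ lie in $[0,L]$ and in the interior of $S$, then $\alpha(s^*+x)<\alpha(x)$ and $\beta(s^*+x)<\beta(x)$; (c) if $s^*\in S^*$ and $x\in[0,L]$ are such that both $x$ and $s^*+x$ lie in $[0,L]\cap S^*$, then $\alpha(s^*+x)>\alpha(x)$ and $\beta(s^*+x)>\beta(x)$.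
   Context: For $x\in S^*\cap[0,L]$, $(a(x),b(x))$ is the maximal interval of $S^*$ containing $x$; for $x$ in the interior of $S$, $(a(x),b(x))$ is the maximal interval of the interior of $S$ containing $x$; for $x\in\partial S$, $a(x)=b(x)=x$. The boundedness of $S$ is a known consequence of the hypotheses. *)

theory Defs
  imports "HOL-Analysis.Analysis"
begin

definition Sset :: "real set \<Rightarrow> real set" where
  "Sset Ss = {0..} - Ss"

definition aS :: "real set \<Rightarrow> real \<Rightarrow> real" where
  "aS Ss x = Sup {y \<in> frontier (Sset Ss). y \<le> x}"

definition bS :: "real set \<Rightarrow> real \<Rightarrow> real" where
  "bS Ss x = Inf {y \<in> frontier (Sset Ss). y \<ge> x}"

definition alphaS :: "real set \<Rightarrow> real \<Rightarrow> real" where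
  "alphaS Ss x = x - aS Ss x"

definition betaS :: "real set \<Rightarrow> real \<Rightarrow> real" where
  "betaS Ss x = bS Ss x - x"

end

theory Submission imports Defs begin

locale L3 =
  fixes Ss :: "real set"
  assumes open_Ss: "open Ss" and pos: "Ss \<subseteq> {0<..}"
    and additive: "\<And>u v. u \<in> Ss \<Longrightarrow> v \<in> Ss \<Longrightarrow> u + v \<in> Ss"
    and nonempty: "Ss \<noteq> {}"
begin

abbreviation "SS \<equiv> Sset Ss"
abbreviation "FF \<equiv> frontier (Sset Ss)"
abbreviation "LL \<equiv> Sup (Sset Ss)"

lemma closedS: "closed SS" unfolding Sset_def by (intro closed_Diff closed_atLeast open_Ss)
lemma mem_S: "x \<in> SS \<longleftrightarrow> x \<ge> 0 \<and> x \<notin> Ss" by (auto simp: Sset_def)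
lemma zero_S: "0 \<in> SS" using pos by (auto simp: Sset_def)

lemma mult: "v \<in> Ss \<Longrightarrow> n \<ge> 1 \<Longrightarrow> real n * v \<in> Ss"
proof (induction n)
  case 0 then show ?case by simp
next
  case (Suc n)
  show ?case
  proof (cases "n = 0")
    case True then show ?thesis using Suc by simp
  next
    case False
    then have "real n * v \<in> Ss" using Suc by simp
    then have "real n * v + v \<in> Ss" using additive Suc by blast
    then show ?thesis by (simp add: algebra_simps)
  qed
qed

lemma boundedS: "SS \<subseteq> {0..T}" if "T = c * (c/e + 2)" "c \<in> Ss" "e > 0" "ball c e \<subseteq> Ss" for T c e
proof
  fix z assume z: "z \<in> SS"
  have c0: "c > 0" using pos that by auto
  have "z \<ge> 0" using z mem_S by auto
  moreover have "z \<le> T"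
  proof (rule ccontr)
    assume "\<not> z \<le> T"
    then have zT: "z > c * (c/e + 2)" using that by simp
    then have zc: "z / c > c/e + 2" using c0 by (simp add: field_simps)
    define n where "n = nat \<lfloor>z/c\<rfloor>"
    have ce: "c/e > 0" using c0 \<open>e>0\<close> by simp
    have fl: "real_of_int \<lfloor>z/c\<rfloor> > z/c - 1" by linarith
    have n1: "real n > c/e + 1" using zc fl ce unfolding n_def by linarith
    have n2: "real n \<le> z/c" "z/c < real n + 1" unfolding n_def using zc ce by linarith+
    have npos: "real n > 0" using n1 ce by linarith
    define w where "w = z / real n"
    have w1: "w \<ge> c" using n2 c0 npos unfolding w_def by (simp add: field_simps)
    have "w < c + c / real n" using n2 c0 npos unfolding w_def by (simp add: field_simps)
    moreover have "c / real n < e" using n1 ce npos \<open>e>0\<close> c0 by (simp add: field_simps)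
    ultimately have "dist c w < e" using w1 by (simp add: dist_real_def)
    then have "w \<in> Ss" using that by auto
    moreover have "n \<ge> 1" using n1 ce by linarith
    ultimately have "real n * w \<in> Ss" by (rule mult)
    then have "z \<in> Ss" using npos unfolding w_def by simp
    then show False using z mem_S by auto
  qed
  ultimately show "z \<in> {0..T}" by simp
qed

lemma bounded_S: "bounded SS"
proof -
  obtain c where c: "c \<in> Ss" using nonempty by auto
  then obtain e where e: "e > 0" "ball c e \<subseteq> Ss" using open_Ss open_contains_ball by blast
  have "SS \<subseteq> {0..c * (c/e + 2)}" using boundedS[OF refl c e] .
  then show ?thesis using compact_Icc compact_imp_bounded bounded_subset by blast
qed

lemma bddA: "bdd_above SS"
proof -
  obtain c where c: "c \<in> Ss" using nonempty by auto
  then obtain e where e: "e > 0" "ball c e \<subseteq> Ss" using open_Ss open_contains_ball by blast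
  have "SS \<subseteq> {0..c * (c/e + 2)}" using boundedS[OF refl c e] .
  then show ?thesis by (rule bdd_above_mono[OF bdd_above_Icc])
qed
lemma L_S: "LL \<in> SS" using closed_contains_Sup[OF _ bddA closedS] zero_S by blast
lemma le_L: "x \<in> SS \<Longrightarrow> x \<le> LL" using cSup_upper bddA by blast

lemma F_S: "FF \<subseteq> SS" using frontier_subset_closed closedS by blast

lemma L_F: "LL \<in> FF"
  unfolding frontier_straddle
proof (intro allI impI conjI)
  fix \<epsilon> :: real assume "\<epsilon> > 0"
  show "\<exists>x\<in>SS. dist LL x < \<epsilon>" using L_S \<open>\<epsilon>>0\<close> by force
  have "LL + \<epsilon>/2 \<notin> SS" using le_L \<open>\<epsilon>>0\<close> by force
  then show "\<exists>x. x \<notin> SS \<and> dist LL x < \<epsilon>" using \<open>\<epsilon>>0\<close> by (intro exI[of _ "LL + \<epsilon>/2"]) (auto simp: dist_real_def)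
qed

lemma zero_F: "0 \<in> FF"
  unfolding frontier_straddle
proof (intro allI impI conjI)
  fix \<epsilon> :: real assume "\<epsilon> > 0"
  show "\<exists>x\<in>SS. dist 0 x < \<epsilon>" using zero_S \<open>\<epsilon>>0\<close> by force
  have "- \<epsilon>/2 \<notin> SS" using mem_S \<open>\<epsilon>>0\<close> by force
  then show "\<exists>x. x \<notin> SS \<and> dist 0 x < \<epsilon>" using \<open>\<epsilon>>0\<close> by (intro exI[of _ "- \<epsilon>/2"]) (auto simp: dist_real_def)
qed

lemma int_iff: "x \<notin> FF \<Longrightarrow> (x \<in> interior SS \<longleftrightarrow> x \<in> SS)"
  using closedS interior_subset unfolding frontier_def by (auto simp: closure_closed)

lemma int_notF: "x \<in> interior SS \<Longrightarrow> x \<notin> FF" unfolding frontier_def by auto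

lemma a_props:
  assumes "0 \<le> z"
  shows "aS Ss z \<in> FF" "aS Ss z \<le> z" "\<And>y. y \<in> FF \<Longrightarrow> y \<le> z \<Longrightarrow> y \<le> aS Ss z" "0 \<le> aS Ss z"
proof -
  let ?A = "{y \<in> FF. y \<le> z}"
  have ne: "?A \<noteq> {}" using zero_F assms by auto
  have bd: "bdd_above ?A" by (auto intro: bdd_aboveI)
  have cl: "closed ?A"
  proof -
    have "?A = FF \<inter> {..z}" by auto
    then show ?thesis by (simp add: closed_Int)
  qed
  show "aS Ss z \<in> FF" unfolding aS_def using closed_contains_Sup[OF ne bd cl] by auto
  show "aS Ss z \<le> z" unfolding aS_def using ne by (intro cSup_least) auto
  show "\<And>y. y \<in> FF \<Longrightarrow> y \<le> z \<Longrightarrow> y \<le> aS Ss z" unfolding aS_def using bd by (intro cSup_upper) auto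
  show "0 \<le> aS Ss z" unfolding aS_def using bd zero_F assms by (intro cSup_upper2[of 0]) auto
qed

lemma b_props:
  assumes "z \<le> LL"
  shows "bS Ss z \<in> FF" "z \<le> bS Ss z" "\<And>y. y \<in> FF \<Longrightarrow> z \<le> y \<Longrightarrow> bS Ss z \<le> y" "bS Ss z \<le> LL"
proof -
  let ?A = "{y \<in> FF. y \<ge> z}"
  have ne: "?A \<noteq> {}" using L_F assms by auto
  have bd: "bdd_below ?A" by (auto intro: bdd_belowI)
  have cl: "closed ?A"
  proof -
    have "?A = FF \<inter> {z..}" by auto
    then show ?thesis by (simp add: closed_Int)
  qed
  show "bS Ss z \<in> FF" unfolding bS_def using closed_contains_Inf[OF ne bd cl] by auto
  show "z \<le> bS Ss z" unfolding bS_def using ne by (intro cInf_greatest) auto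
  show "\<And>y. y \<in> FF \<Longrightarrow> z \<le> y \<Longrightarrow> bS Ss z \<le> y" unfolding bS_def using bd by (intro cInf_lower) auto
  show "bS Ss z \<le> LL" unfolding bS_def using bd L_F assms by (intro cInf_lower) auto
qed

lemma ab_F: "0 \<le> z \<Longrightarrow> z \<le> LL \<Longrightarrow> z \<in> FF \<Longrightarrow> aS Ss z = z \<and> bS Ss z = z"
  using a_props[of z] b_props[of z] by (meson antisym order_refl)

lemma ab_notF: "0 \<le> z \<Longrightarrow> z \<le> LL \<Longrightarrow> z \<notin> FF \<Longrightarrow> aS Ss z < z \<and> z < bS Ss z"
  using a_props[of z] b_props[of z] by (metis order_less_le)

lemma noF: "0 \<le> z \<Longrightarrow> z \<le> LL \<Longrightarrow> aS Ss z < w \<Longrightarrow> w < bS Ss z \<Longrightarrow> w \<notin> FF"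
  using a_props[of z] b_props[of z] by (meson le_cases not_le)

lemma same_side:
  assumes z: "0 \<le> z" "z \<le> LL" and y: "aS Ss z < y" "y < bS Ss z"
  shows "y \<in> SS \<longleftrightarrow> z \<in> SS"
proof -
  let ?I = "{min y z..max y z}"
  have conn: "connected ?I" by simp
  have noI: "?I \<inter> FF = {}"
  proof (rule ccontr)
    assume "?I \<inter> FF \<noteq> {}"
    then obtain w where w: "w \<in> ?I" "w \<in> FF" by blast
    have "z \<notin> FF" using ab_F[OF z] y by auto
    then have "aS Ss z < z" "z < bS Ss z" using ab_notF[OF z] by auto
    then have "aS Ss z < w" "w < bS Ss z" using w(1) y by (auto simp: min_def max_def split: if_splits)
    then show False using noF[OF z] w(2) by blast
  qed
  have yI: "y \<in> ?I" and zI: "z \<in> ?I" by auto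
  show ?thesis
  proof
    assume "y \<in> SS"
    show "z \<in> SS"
    proof (rule ccontr)
      assume "z \<notin> SS"
      then have "?I \<inter> FF \<noteq> {}" using connected_Int_frontier[OF conn, of SS] yI zI \<open>y \<in> SS\<close> by blast
      then show False using noI by blast
    qed
  next
    assume "z \<in> SS"
    show "y \<in> SS"
    proof (rule ccontr)
      assume "y \<notin> SS"
      then have "?I \<inter> FF \<noteq> {}" using connected_Int_frontier[OF conn, of SS] yI zI \<open>z \<in> SS\<close> by blast
      then show False using noI by blast
    qed
  qed
qed

lemma same_side_int:
  assumes z: "0 \<le> z" "z \<le> LL" and y: "aS Ss z < y" "y < bS Ss z"
  shows "y \<in> interior SS \<longleftrightarrow> z \<in> interior SS"
proof -
  have "y \<notin> FF" using noF[OF z y] .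
  moreover have "z \<notin> FF" using ab_F[OF z] y by auto
  ultimately show ?thesis using int_iff same_side[OF z y] by blast
qed

lemma K: assumes "c \<in> FF" "v \<in> Ss" shows "c + v \<notin> interior SS"
proof
  assume ci: "c + v \<in> interior SS"
  have c0: "c \<ge> 0" using assms F_S mem_S by auto
  show False
  proof (cases "c = 0")
    case True then show False using ci interior_subset assms mem_S by auto
  next
    case False
    then have cp: "c > 0" using c0 by simp
    obtain e where e: "e > 0" "ball (c+v) e \<subseteq> SS" using ci open_interior open_contains_ball
      by (metis interior_subset subset_trans)
    obtain u where u: "u \<notin> SS" "dist c u < min e c" using assms(1) unfolding frontier_straddle
      using e cp by (meson min_less_iff_conj)
    have "u > 0" using u(2) by (auto simp: dist_real_def)
    then have "u \<in> Ss" using u(1) mem_S by auto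
    then have "u + v \<in> Ss" using additive assms by blast
    moreover have "dist (c+v) (u+v) < e" using u(2) by (simp add: dist_real_def)
    then have "u + v \<in> ball (c+v) e" by simp
    ultimately show False using e mem_S by blast
  qed
qed

lemma partA: assumes s: "s \<in> SS" shows "alphaS Ss s \<in> SS \<and> betaS Ss s \<in> SS"
proof -
  have s0: "0 \<le> s" "s \<le> LL" using s mem_S le_L by auto
  show ?thesis
  proof (cases "s \<in> FF")
    case True
    then show ?thesis using ab_F[OF s0 True] zero_S unfolding alphaS_def betaS_def by simp
  next
    case False
    have si: "s \<in> interior SS" using int_iff[OF False] s by simp
    have ab: "aS Ss s < s" "s < bS Ss s" using ab_notF[OF s0 False] by auto
    have aF: "aS Ss s \<in> FF" using a_props[OF s0(1)] by auto
    have A: "alphaS Ss s \<in> SS"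
    proof -
      have "s - aS Ss s \<notin> Ss"
      proof
        assume "s - aS Ss s \<in> Ss"
        from K[OF aF this] si show False by simp
      qed
      then show ?thesis using ab mem_S unfolding alphaS_def by simp
    qed
    have B: "betaS Ss s \<in> SS"
    proof -
      have "bS Ss s - s \<notin> Ss"
      proof
        assume t: "bS Ss s - s \<in> Ss"
        have tp: "bS Ss s - s > 0" using t pos by auto
        have "aS Ss s + (bS Ss s - s) \<notin> interior SS" using K[OF aF t] .
        moreover have "aS Ss s < aS Ss s + (bS Ss s - s)" "aS Ss s + (bS Ss s - s) < bS Ss s"
          using tp ab by auto
        ultimately show False using same_side_int[OF s0] si by blast
      qed
      then show ?thesis using ab mem_S unfolding betaS_def by simp
    qed
    show ?thesis using A B by simp
  qed
qed

lemma partB: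
  assumes s': "s' \<in> Ss" and x: "0 \<le> x" "x \<le> LL" "x \<in> interior SS"
    and z: "0 \<le> s' + x" "s' + x \<le> LL" "s' + x \<in> interior SS"
  shows "alphaS Ss (s' + x) < alphaS Ss x \<and> betaS Ss (s' + x) < betaS Ss x"
proof -
  obtain \<epsilon> where e: "\<epsilon> > 0" "ball s' \<epsilon> \<subseteq> Ss" using s' open_Ss open_contains_ball by blast
  have xF: "x \<notin> FF" using int_notF x(3) .
  have abx: "aS Ss x < x" "x < bS Ss x" using ab_notF[OF x(1,2) xF] by auto
  have zF: "s' + x \<notin> FF" using int_notF z(3) .
  have abz: "aS Ss (s'+x) < s'+x" "s'+x < bS Ss (s'+x)" using ab_notF[OF z(1,2) zF] by auto
  define \<delta> where "\<delta> = min (\<epsilon>/2) (min ((x - aS Ss x)/2) ((bS Ss x - x)/2))"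
  have d: "\<delta> > 0" "\<delta> < \<epsilon>" "\<delta> < x - aS Ss x" "\<delta> < bS Ss x - x" using e abx unfolding \<delta>_def by (auto simp: min_def)
  have v1: "s' + \<delta> \<in> Ss" using e d by (intro subsetD[OF e(2)]) (auto simp: dist_real_def)
  have v2: "s' - \<delta> \<in> Ss" using e d by (intro subsetD[OF e(2)]) (auto simp: dist_real_def)
  have aF: "aS Ss x \<in> FF" using a_props[OF x(1)] by auto
  have bF: "bS Ss x \<in> FF" using b_props[OF x(2)] by auto
  have p: "aS Ss x + (s' + \<delta>) \<notin> interior SS" using K[OF aF v1] .
  have q: "bS Ss x + (s' - \<delta>) \<notin> interior SS" using K[OF bF v2] .
  have pa: "aS Ss x + (s' + \<delta>) \<le> aS Ss (s'+x)"
  proof (rule ccontr)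
    assume "\<not> ?thesis"
    moreover have "aS Ss x + (s' + \<delta>) < bS Ss (s'+x)" using d abz by linarith
    ultimately show False using same_side_int[OF z(1,2)] z(3) p by auto
  qed
  have qb: "bS Ss (s'+x) \<le> bS Ss x + (s' - \<delta>)"
  proof (rule ccontr)
    assume "\<not> ?thesis"
    moreover have "aS Ss (s'+x) < bS Ss x + (s' - \<delta>)" using d abz by linarith
    ultimately show False using same_side_int[OF z(1,2)] z(3) q by auto
  qed
  show ?thesis using pa qb d unfolding alphaS_def betaS_def by linarith
qed

lemma partC:
  assumes s': "s' \<in> Ss" and x: "0 \<le> x" "x \<le> LL" "x \<in> Ss"
    and z: "0 \<le> s' + x" "s' + x \<le> LL" "s' + x \<in> Ss"
  shows "alphaS Ss (s' + x) > alphaS Ss x \<and> betaS Ss (s' + x) > betaS Ss x"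
proof -
  obtain \<epsilon> where e: "\<epsilon> > 0" "ball s' \<epsilon> \<subseteq> Ss" using s' open_Ss open_contains_ball by blast
  have xF: "x \<notin> FF" using x(3) F_S mem_S by auto
  have abx: "aS Ss x < x" "x < bS Ss x" using ab_notF[OF x(1,2) xF] by auto
  define \<delta> where "\<delta> = min (\<epsilon>/2) (min ((x - aS Ss x)/2) ((bS Ss x - x)/2))"
  have d: "\<delta> > 0" "\<delta> < \<epsilon>" "\<delta> < x - aS Ss x" "\<delta> < bS Ss x - x" using e abx unfolding \<delta>_def by (auto simp: min_def)
  have a0: "0 \<le> aS Ss x" using a_props[OF x(1)] by auto
  have inSs: "w \<in> Ss" if w: "aS Ss x + s' - \<delta>/3 \<le> w" "w \<le> bS Ss x + s' + \<delta>/3" for w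
  proof -
    define y where "y = max (aS Ss x + \<delta>/3) (min (bS Ss x - \<delta>/3) (w - s'))"
    have y: "aS Ss x < y" "y < bS Ss x" using d unfolding y_def by auto
    have "dist s' (w - y) < \<epsilon>" using d w unfolding y_def by (auto simp: dist_real_def min_def max_def)
    then have wy: "w - y \<in> Ss" using e by auto
    have "y \<notin> SS" using same_side[OF x(1,2) y] x(3) mem_S by auto
    moreover have "y \<ge> 0" using y a0 by linarith
    ultimately have "y \<in> Ss" using mem_S by auto
    from additive[OF this wy] show ?thesis by simp
  qed
  have aFz: "aS Ss (s'+x) \<in> FF" "aS Ss (s'+x) \<le> s' + x" using a_props[OF z(1)] by auto
  have bFz: "bS Ss (s'+x) \<in> FF" "s' + x \<le> bS Ss (s'+x)" using b_props[OF z(2)] by auto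
  have "aS Ss (s'+x) < aS Ss x + s' - \<delta>/3"
  proof (rule ccontr)
    assume "\<not> ?thesis"
    then have "aS Ss (s'+x) \<in> Ss" using aFz abx d by (intro inSs) auto
    then show False using aFz F_S mem_S by auto
  qed
  moreover have "bS Ss (s'+x) > bS Ss x + s' + \<delta>/3"
  proof (rule ccontr)
    assume "\<not> ?thesis"
    then have "bS Ss (s'+x) \<in> Ss" using bFz abx d by (intro inSs) auto
    then show False using bFz F_S mem_S by auto
  qed
  ultimately show ?thesis using d unfolding alphaS_def betaS_def by linarith
qed

end
theorem lemma3:
  fixes Ss :: "real set"
  assumes open_Ss: "open Ss"
    and pos: "Ss \<subseteq> {0<..}"
    and additive: "\<And>u v. u \<in> Ss \<Longrightarrow> v \<in> Ss \<Longrightarrow> u + v \<in> Ss"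
    and nonempty: "Ss \<noteq> {}"
  defines "S \<equiv> Sset Ss"
    and "L \<equiv> Sup (Sset Ss)"
  shows "bounded S
    \<and> (\<forall>s\<in>S. alphaS Ss s \<in> S \<and> betaS Ss s \<in> S)
    \<and> (\<forall>s'\<in>Ss. \<forall>x. x \<in> {0..L} \<and> x \<in> interior S \<and> s' + x \<in> {0..L} \<and> s' + x \<in> interior S
          \<longrightarrow> alphaS Ss (s' + x) < alphaS Ss x \<and> betaS Ss (s' + x) < betaS Ss x)
    \<and> (\<forall>s'\<in>Ss. \<forall>x. x \<in> {0..L} \<and> x \<in> Ss \<and> s' + x \<in> {0..L} \<and> s' + x \<in> Ss
          \<longrightarrow> alphaS Ss (s' + x) > alphaS Ss x \<and> betaS Ss (s' + x) > betaS Ss x)"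
proof -
  interpret L3 Ss using assms by unfold_locales auto
  show ?thesis unfolding S_def L_def
    using bounded_S partA partB partC by auto
qed

end
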